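(* Let $\mathbb{L}(\theta,\omega):=\mathbb{E}_{(x,y)\sim Q}\,\mathcal{L}(\theta,\omega;(x,y))$. Assume: (i) for all $\theta,\omega$, $\mathbb{E}_{(x,y)\sim Q}[\tfrac{\partial\mathcal{L}}{\partial\theta}(\theta,\omega;(x,y))]=\nabla_\theta\mathbb{L}(\theta,\omega)$ and $\mathbb{E}_{(x,y)\sim Q}\|\tfrac{\partial\mathcal{L}}{\partial\theta}(\theta,\omega;(x,y))-\nabla_\theta\mathbb{L}(\theta,\omega)\|^2\le\sigma^2$; (ii) for every sample $(x,y)$ and every $\omega$, $\|\nabla_\theta\mathcal{L}(\theta_1,\omega;(x,y))-\nabla_\theta\mathcal{L}(\theta_2,\omega;(x,y))\|\le l\|\theta_1-\theta_2\|$. Let $g_\theta(\theta,\omega)=\frac1M\sum_{i=1}^M\frac{\partial\mathcal{L}}{\partial\theta}(\theta,\omega;(x_i,y_i))$ be a minibatch gradient estimate with $(x_i,y_i)$ i.i.d. from $Q$, fresh samples being drawn at each evaluation. For iterates $(\theta_t,\omega_t)$ and $\rho>0$, set $\theta_{t+1/2}:=\theta_t+\rho\,g_\theta(\theta_t,\omega_t)$. Then $$\mathbb{E}\|g_\theta(\theta_{t+1/2},\omega_t)\|^2\le(4\rho^2l^2+2\rho l+2)\,\mathbb{E}\|\nabla_\theta\mathbb{L}(\theta_t,\omega_t)\|^2+(5\rho^2l^2+2)\frac{\sigma^2}{M}.$$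
   Context: $\theta$ denotes model parameters and $\omega$ sampling weights; $\mathcal{L}(\theta,\omega;(x,y))$ is a differentiable per-sample loss and $Q$ the data distribution. Expectations are over all sampling randomness. *)

theory Defs
  imports "HOL-Probability.Probability"
begin

definition minibatch_grad ::
  "('a \<Rightarrow> 'w \<Rightarrow> 'z \<Rightarrow> 'b::real_vector) \<Rightarrow> nat \<Rightarrow> 'a \<Rightarrow> 'w \<Rightarrow> (nat \<Rightarrow> 'z) \<Rightarrow> 'b" where
  "minibatch_grad G M \<theta> \<omega> zs = (1 / real M) *\<^sub>R (\<Sum>i<M. G \<theta> \<omega> (zs i))"

end

theory Submission
  imports Defs
begin

lemma PiM_single:
  fixes Q :: "'z measure" and f :: "'z \<Rightarrow> real" and i M :: nat
  assumes Q: "prob_space Q" and i: "i < M" and f: "integrable Q f"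
  shows "integrable (PiM {..<M} (\<lambda>_. Q)) (\<lambda>zs. f (zs i))"
    "(\<integral>zs. f (zs i) \<partial>PiM {..<M} (\<lambda>_. Q)) = (\<integral>z. f z \<partial>Q)"
proof -
  interpret Q: prob_space Q by fact
  interpret PP: product_prob_space "\<lambda>_. Q" "{..<M}" by unfold_locales
  let ?F = "\<lambda>k x. if k = i then f x else 1"
  have int: "integrable Q (?F k)" if "k \<in> {..<M}" for k by (cases "k = i") (auto simp: f)
  have eq: "(\<Prod>k\<in>{..<M}. ?F k (zs k)) = f (zs i)" for zs
    using i prod.delta[of "{..<M}" i "\<lambda>k. f (zs k)"] by simp
  show "integrable (PiM {..<M} (\<lambda>_. Q)) (\<lambda>zs. f (zs i))"
    using PP.product_integrable_prod[of "{..<M}" ?F, OF _ int] by (simp add: eq)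
  show "(\<integral>zs. f (zs i) \<partial>PiM {..<M} (\<lambda>_. Q)) = (\<integral>z. f z \<partial>Q)"
  proof -
    have "(\<Prod>k\<in>{..<M}. integral\<^sup>L Q (?F k)) = (\<Prod>k\<in>{..<M}. (if k = i then (\<integral>z. f z \<partial>Q) else 1))"
      by (intro prod.cong) (auto simp: Q.prob_space)
    also have "\<dots> = (\<integral>z. f z \<partial>Q)"
      using i prod.delta[of "{..<M}" i "\<lambda>k. (\<integral>z. f z \<partial>Q)"] by simp
    finally show ?thesis
      using PP.product_integral_prod[of "{..<M}" ?F, OF _ int] by (simp add: eq)
  qed
qed

lemma PiM_pair:
  fixes Q :: "'z measure" and f g :: "'z \<Rightarrow> real" and i j M :: nat
  assumes Q: "prob_space Q" and i: "i < M" and j: "j < M" and ij: "i \<noteq> j"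
    and f: "integrable Q f" and g: "integrable Q g"
  shows "integrable (PiM {..<M} (\<lambda>_. Q)) (\<lambda>zs. f (zs i) * g (zs j))"
    "(\<integral>zs. f (zs i) * g (zs j) \<partial>PiM {..<M} (\<lambda>_. Q)) = (\<integral>z. f z \<partial>Q) * (\<integral>z. g z \<partial>Q)"
proof -
  interpret Q: prob_space Q by fact
  interpret PP: product_prob_space "\<lambda>_. Q" "{..<M}" by unfold_locales
  let ?F = "\<lambda>k x. (if k = i then f x else 1) * (if k = j then g x else 1)"
  have int: "integrable Q (?F k)" if "k \<in> {..<M}" for k using ij by (cases "k = i"; cases "k = j") (auto simp: f g)
  have eq: "(\<Prod>k\<in>{..<M}. ?F k (zs k)) = f (zs i) * g (zs j)" for zs
    using i j prod.delta[of "{..<M}" i "\<lambda>k. f (zs k)"] prod.delta[of "{..<M}" j "\<lambda>k. g (zs k)"] by (simp add: prod.distrib)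
  have eq2: "(\<Prod>k\<in>{..<M}. integral\<^sup>L Q (?F k)) = (\<integral>z. f z \<partial>Q) * (\<integral>z. g z \<partial>Q)"
  proof -
    have "(\<Prod>k\<in>{..<M}. integral\<^sup>L Q (?F k)) = (\<Prod>k\<in>{..<M}. (if k = i then (\<integral>z. f z \<partial>Q) else 1) * (if k = j then (\<integral>z. g z \<partial>Q) else 1))"
      using ij by (intro prod.cong) (auto simp: Q.prob_space)
    also have "\<dots> = (\<integral>z. f z \<partial>Q) * (\<integral>z. g z \<partial>Q)"
      using i j prod.delta[of "{..<M}" i "\<lambda>k. (\<integral>z. f z \<partial>Q)"] prod.delta[of "{..<M}" j "\<lambda>k. (\<integral>z. g z \<partial>Q)"] by (simp add: prod.distrib)
    finally show ?thesis .
  qed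
  show "integrable (PiM {..<M} (\<lambda>_. Q)) (\<lambda>zs. f (zs i) * g (zs j))"
    using PP.product_integrable_prod[of "{..<M}" ?F, OF _ int] by (simp add: eq)
  show "(\<integral>zs. f (zs i) * g (zs j) \<partial>PiM {..<M} (\<lambda>_. Q)) = (\<integral>z. f z \<partial>Q) * (\<integral>z. g z \<partial>Q)"
    using PP.product_integral_prod[of "{..<M}" ?F, OF _ int] by (simp add: eq eq2)
qed

lemma mean_sq:
  fixes Q :: "'z measure" and X :: "'z \<Rightarrow> real" and m v :: real and M :: nat
  assumes Q: "prob_space Q" and M: "M > 0" and X: "integrable Q X"
    and X2: "integrable Q (\<lambda>z. (X z - m)\<^sup>2)"
    and EX: "(\<integral>z. X z \<partial>Q) = m" and VX: "(\<integral>z. (X z - m)\<^sup>2 \<partial>Q) = v"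
  shows "integrable (PiM {..<M} (\<lambda>_. Q)) (\<lambda>zs. ((1 / real M) * (\<Sum>i<M. X (zs i)))\<^sup>2)"
    "(\<integral>zs. ((1 / real M) * (\<Sum>i<M. X (zs i)))\<^sup>2 \<partial>PiM {..<M} (\<lambda>_. Q)) = m\<^sup>2 + v / real M"
proof -
  interpret Q: prob_space Q by fact
  let ?P = "PiM {..<M} (\<lambda>_. Q)"
  interpret PQ: prob_space ?P using prob_space_PiM[OF Q] .
  have alg: "((1 / real M) * (\<Sum>i<M. X (zs i)))\<^sup>2 =
     m\<^sup>2 + (2 * m / real M) * (\<Sum>i<M. X (zs i) - m)
       + (1 / (real M)\<^sup>2) * (\<Sum>i<M. \<Sum>j<M. (X (zs i) - m) * (X (zs j) - m))" for zs
  proof -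
    have s: "(\<Sum>i<M. X (zs i)) = real M * m + (\<Sum>i<M. X (zs i) - m)"
      by (simp add: sum_subtractf)
    have p: "(\<Sum>i<M. \<Sum>j<M. (X (zs i) - m) * (X (zs j) - m)) = (\<Sum>i<M. X (zs i) - m) * (\<Sum>i<M. X (zs i) - m)"
      by (simp add: sum_product)
    show ?thesis unfolding s p using M
      by (simp add: field_simps power2_eq_square)
  qed
  have Xm: "integrable Q (\<lambda>z. X z - m)" using X by simp
  have EXm: "(\<integral>z. X z - m \<partial>Q) = 0" using X EX by (simp add: Q.prob_space)
  have iY: "integrable ?P (\<lambda>zs. X (zs i) - m)" "(\<integral>zs. X (zs i) - m \<partial>?P) = 0" if "i < M" for i
    using PiM_single[OF Q that Xm] EXm by auto
  have iYY: "integrable ?P (\<lambda>zs. (X (zs i) - m) * (X (zs j) - m))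
     \<and> (\<integral>zs. (X (zs i) - m) * (X (zs j) - m) \<partial>?P) = (if i = j then v else 0)"
    if "i < M" "j < M" for i j
  proof (cases "i = j")
    case True
    then show ?thesis
      using PiM_single[OF Q that(1) X2] VX by (simp add: power2_eq_square)
  next
    case False
    then show ?thesis
      using PiM_pair[OF Q that False Xm Xm] EXm by simp
  qed
  have int_rhs: "integrable ?P (\<lambda>zs. m\<^sup>2 + (2 * m / real M) * (\<Sum>i<M. X (zs i) - m)
       + (1 / (real M)\<^sup>2) * (\<Sum>i<M. \<Sum>j<M. (X (zs i) - m) * (X (zs j) - m)))"
    by (auto intro!: Bochner_Integration.integrable_add integrable_mult_right integrable_divide integrable_sum iY iYY[THEN conjunct1])
  show "integrable ?P (\<lambda>zs. ((1 / real M) * (\<Sum>i<M. X (zs i)))\<^sup>2)"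
    unfolding alg by (rule int_rhs)
  define A where "A zs = (\<Sum>i<M. X (zs i) - m)" for zs
  define B where "B zs = (\<Sum>i<M. \<Sum>j<M. (X (zs i) - m) * (X (zs j) - m))" for zs
  have iA: "integrable ?P A" unfolding A_def by (auto intro!: integrable_sum iY)
  have EA: "(\<integral>zs. A zs \<partial>?P) = 0" unfolding A_def
    by (simp add: Bochner_Integration.integral_sum iY)
  have iB: "integrable ?P B" unfolding B_def by (auto intro!: integrable_sum iYY[THEN conjunct1])
  have EB: "(\<integral>zs. B zs \<partial>?P) = real M * v"
  proof -
    have "(\<integral>zs. (\<Sum>i<M. \<Sum>j<M. (X (zs i) - m) * (X (zs j) - m)) \<partial>?P)
        = (\<Sum>i<M. (\<integral>zs. (\<Sum>j<M. (X (zs i) - m) * (X (zs j) - m)) \<partial>?P))"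
      by (rule Bochner_Integration.integral_sum[where I="{..<M}" and M="?P" and f="\<lambda>i zs. \<Sum>j<M. (X (zs i) - m) * (X (zs j) - m)"]) (auto intro!: integrable_sum iYY[THEN conjunct1])
    also have "\<dots> = (\<Sum>i<M. (\<Sum>j<M. (\<integral>zs. (X (zs i) - m) * (X (zs j) - m) \<partial>?P)))"
      by (intro sum.cong refl Bochner_Integration.integral_sum[where I="{..<M}" and M="?P" and f="\<lambda>j zs. (X (zs i) - m) * (X (zs j) - m)" for i]) (auto intro!: iYY[THEN conjunct1])
    also have "\<dots> = (\<Sum>i<M. (\<Sum>j<M. (if i = j then v else 0)))"
      by (intro sum.cong refl) (simp add: iYY)
    also have "\<dots> = real M * v" by simp
    finally show ?thesis by (simp add: B_def[abs_def])
  qed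
  have "(\<integral>zs. ((1 / real M) * (\<Sum>i<M. X (zs i)))\<^sup>2 \<partial>?P)
      = (\<integral>zs. m\<^sup>2 + (2 * m / real M) * A zs + (1 / (real M)\<^sup>2) * B zs \<partial>?P)"
    unfolding alg A_def B_def ..
  also have "\<dots> = m\<^sup>2 + (2 * m / real M) * (\<integral>zs. A zs \<partial>?P) + (1 / (real M)\<^sup>2) * (\<integral>zs. B zs \<partial>?P)"
    using iA iB by (simp add: PQ.prob_space)
  also have "\<dots> = m\<^sup>2 + v / real M"
    using M by (simp add: EA EB power2_eq_square)
  finally show "(\<integral>zs. ((1 / real M) * (\<Sum>i<M. X (zs i)))\<^sup>2 \<partial>?P) = m\<^sup>2 + v / real M" .
qed


lemma norm2_Basis: "(norm (x::'a::euclidean_space))\<^sup>2 = (\<Sum>b\<in>Basis. (x \<bullet> b)\<^sup>2)"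
proof -
  have "(norm x)\<^sup>2 = x \<bullet> x" by (rule power2_norm_eq_inner)
  also have "\<dots> = (\<Sum>b\<in>Basis. (x \<bullet> b)\<^sup>2)" by (simp add: euclidean_inner[of x x] power2_eq_square)
  finally show ?thesis .
qed

lemma mb_bound:
  fixes Q :: "'z measure" and g :: "'z \<Rightarrow> 'a::euclidean_space" and \<mu> :: 'a
    and \<sigma> :: real and M :: nat
  assumes Q: "prob_space Q" and M: "M > 0" and gm: "g \<in> borel_measurable Q"
    and Eg: "(\<integral>z. g z \<partial>Q) = \<mu>"
    and V: "(\<integral>\<^sup>+ z. ennreal ((norm (g z - \<mu>))\<^sup>2) \<partial>Q) \<le> ennreal (\<sigma>\<^sup>2)"
  shows "(\<integral>\<^sup>+ zs. ennreal ((norm ((1 / real M) *\<^sub>R (\<Sum>i<M. g (zs i))))\<^sup>2) \<partial>PiM {..<M} (\<lambda>_. Q))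
     \<le> ennreal ((norm \<mu>)\<^sup>2 + \<sigma>\<^sup>2 / real M)"
proof -
  interpret Q: prob_space Q by fact
  let ?P = "PiM {..<M} (\<lambda>_. Q)"
  interpret PQ: prob_space ?P using prob_space_PiM[OF Q] .
  have fin: "(\<integral>\<^sup>+ z. ennreal ((norm (g z - \<mu>))\<^sup>2) \<partial>Q) < \<infinity>"
    using V by (simp add: le_less_trans)
  have int2: "integrable Q (\<lambda>z. (norm (g z - \<mu>))\<^sup>2)"
    by (rule integrableI_bounded) (use gm fin in auto)
  have E2: "(\<integral>z. (norm (g z - \<mu>))\<^sup>2 \<partial>Q) \<le> \<sigma>\<^sup>2"
  proof -
    have "ennreal (\<integral>z. (norm (g z - \<mu>))\<^sup>2 \<partial>Q) \<le> ennreal (\<sigma>\<^sup>2)"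
      using V by (subst nn_integral_eq_integral[OF int2, symmetric]) auto
    then show ?thesis by (simp add: ennreal_le_iff)
  qed
  have intgm: "integrable Q (\<lambda>z. g z - \<mu>)"
  proof (rule Bochner_Integration.integrable_bound[where f="\<lambda>z. 1 + (norm (g z - \<mu>))\<^sup>2"])
    show "integrable Q (\<lambda>z. 1 + (norm (g z - \<mu>))\<^sup>2)" using int2 by simp
    show "(\<lambda>z. g z - \<mu>) \<in> borel_measurable Q" using gm by simp
    show "AE z in Q. norm (g z - \<mu>) \<le> norm (1 + (norm (g z - \<mu>))\<^sup>2)"
    proof (rule AE_I2)
      fix z
      have "norm (g z - \<mu>) \<le> 1 + (norm (g z - \<mu>))\<^sup>2"
      proof -
        have "2 * norm (g z - \<mu>) \<le> 1 + norm (g z - \<mu>) * norm (g z - \<mu>)"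
          using zero_le_power2[of "norm (g z - \<mu>) - 1"] by (simp add: power2_eq_square algebra_simps)
        moreover have "0 \<le> norm (g z - \<mu>)" by simp
        ultimately show ?thesis unfolding power2_eq_square by linarith
      qed
      then show "norm (g z - \<mu>) \<le> norm (1 + (norm (g z - \<mu>))\<^sup>2)" by simp
    qed
  qed
  have intg: "integrable Q g"
  proof -
    have "integrable Q (\<lambda>z. (g z - \<mu>) + \<mu>)"
      by (rule Bochner_Integration.integrable_add[OF intgm]) simp
    moreover have "(\<lambda>z. (g z - \<mu>) + \<mu>) = g" by simp
    ultimately show ?thesis by metis
  qed
  define v where "v b = (\<integral>z. (g z \<bullet> b - \<mu> \<bullet> b)\<^sup>2 \<partial>Q)" for b
  have Xb: "integrable Q (\<lambda>z. g z \<bullet> b)" "(\<integral>z. g z \<bullet> b \<partial>Q) = \<mu> \<bullet> b" for b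
    using intg Eg by auto
  have X2b: "integrable Q (\<lambda>z. (g z \<bullet> b - \<mu> \<bullet> b)\<^sup>2)" if b: "b \<in> Basis" for b
  proof (rule Bochner_Integration.integrable_bound[OF int2])
    show "(\<lambda>z. (g z \<bullet> b - \<mu> \<bullet> b)\<^sup>2) \<in> borel_measurable Q" using gm by simp
    show "AE z in Q. norm ((g z \<bullet> b - \<mu> \<bullet> b)\<^sup>2) \<le> norm ((norm (g z - \<mu>))\<^sup>2)"
    proof (rule AE_I2)
      fix z
      have "\<bar>(g z - \<mu>) \<bullet> b\<bar> \<le> norm (g z - \<mu>)" using Basis_le_norm[OF b] .
      then have "((g z - \<mu>) \<bullet> b)\<^sup>2 \<le> (norm (g z - \<mu>))\<^sup>2"
        by (metis abs_ge_zero power2_abs power_mono)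
      then show "norm ((g z \<bullet> b - \<mu> \<bullet> b)\<^sup>2) \<le> norm ((norm (g z - \<mu>))\<^sup>2)"
        by (simp add: inner_diff_left)
    qed
  qed
  have sumv: "(\<Sum>b\<in>Basis. v b) \<le> \<sigma>\<^sup>2"
  proof -
    have "(\<Sum>b\<in>Basis. v b) = (\<integral>z. (\<Sum>b\<in>Basis. (g z \<bullet> b - \<mu> \<bullet> b)\<^sup>2) \<partial>Q)"
      unfolding v_def by (rule Bochner_Integration.integral_sum[symmetric]) (rule X2b)
    also have "\<dots> = (\<integral>z. (norm (g z - \<mu>))\<^sup>2 \<partial>Q)"
      by (simp add: norm2_Basis[of "g _ - \<mu>"] inner_diff_left)
    finally show ?thesis using E2 by simp
  qed
  have mb: "(norm ((1 / real M) *\<^sub>R (\<Sum>i<M. g (zs i))))\<^sup>2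
      = (\<Sum>b\<in>Basis. ((1 / real M) * (\<Sum>i<M. g (zs i) \<bullet> b))\<^sup>2)" for zs
    unfolding norm2_Basis by (simp add: inner_sum_left)
  have ms: "integrable ?P (\<lambda>zs. ((1 / real M) * (\<Sum>i<M. g (zs i) \<bullet> b))\<^sup>2)"
      "(\<integral>zs. ((1 / real M) * (\<Sum>i<M. g (zs i) \<bullet> b))\<^sup>2 \<partial>?P) = (\<mu> \<bullet> b)\<^sup>2 + v b / real M"
    if "b \<in> Basis" for b
    using mean_sq[OF Q M Xb(1)[of b] X2b[OF that] Xb(2)[of b] v_def[of b, symmetric]] by auto
  have iS: "integrable ?P (\<lambda>zs. \<Sum>b\<in>Basis. ((1 / real M) * (\<Sum>i<M. g (zs i) \<bullet> b))\<^sup>2)"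
    using ms(1) by auto
  have "(\<integral>\<^sup>+ zs. ennreal ((norm ((1 / real M) *\<^sub>R (\<Sum>i<M. g (zs i))))\<^sup>2) \<partial>?P)
      = (\<integral>\<^sup>+ zs. ennreal (\<Sum>b\<in>Basis. ((1 / real M) * (\<Sum>i<M. g (zs i) \<bullet> b))\<^sup>2) \<partial>?P)"
    by (simp only: mb)
  also have "\<dots> = ennreal (\<integral>zs. (\<Sum>b\<in>Basis. ((1 / real M) * (\<Sum>i<M. g (zs i) \<bullet> b))\<^sup>2) \<partial>?P)"
    by (rule nn_integral_eq_integral[OF iS]) (auto intro!: sum_nonneg)
  also have "(\<integral>zs. (\<Sum>b\<in>Basis. ((1 / real M) * (\<Sum>i<M. g (zs i) \<bullet> b))\<^sup>2) \<partial>?P)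
      = (\<Sum>b\<in>Basis. (\<mu> \<bullet> b)\<^sup>2 + v b / real M)"
  proof -
    have "(\<integral>zs. (\<Sum>b\<in>Basis. ((1 / real M) * (\<Sum>i<M. g (zs i) \<bullet> b))\<^sup>2) \<partial>?P)
      = (\<Sum>b\<in>Basis. (\<integral>zs. ((1 / real M) * (\<Sum>i<M. g (zs i) \<bullet> b))\<^sup>2 \<partial>?P))"
      by (rule Bochner_Integration.integral_sum) (rule ms(1))
    also have "\<dots> = (\<Sum>b\<in>Basis. (\<mu> \<bullet> b)\<^sup>2 + v b / real M)"
      by (rule sum.cong[OF refl]) (rule ms(2))
    finally show ?thesis .
  qed
  also have "\<dots> = (norm \<mu>)\<^sup>2 + (\<Sum>b\<in>Basis. v b) / real M"
    by (simp add: sum.distrib norm2_Basis[of \<mu>] sum_divide_distrib)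
  also have "\<dots> \<le> (norm \<mu>)\<^sup>2 + \<sigma>\<^sup>2 / real M"
    using sumv M by (simp add: divide_right_mono)
  finally show ?thesis by (simp add: ennreal_leI)
qed


lemma mb_meas:
  fixes G :: "'a::euclidean_space \<Rightarrow> 'w \<Rightarrow> 'z \<Rightarrow> 'a"
  assumes G_meas: "(\<lambda>(x, w, z). G x w z) \<in> borel_measurable (borel \<Otimes>\<^sub>M W \<Otimes>\<^sub>M Q)"
    and a: "a \<in> borel_measurable N" and w: "w \<in> measurable N W"
    and s: "s \<in> measurable N (PiM {..<M} (\<lambda>_. Q))"
  shows "(\<lambda>x. minibatch_grad G M (a x) (w x) (s x)) \<in> borel_measurable N"
proof -
  have "(\<lambda>x. G (a x) (w x) (s x i)) \<in> borel_measurable N" if "i < M" for i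
  proof -
    have si: "(\<lambda>x. s x i) \<in> measurable N Q"
      using measurable_compose[OF s measurable_component_singleton[of i "{..<M}" "\<lambda>_. Q"]] that
      by simp
    have "(\<lambda>x. (a x, w x, s x i)) \<in> measurable N (borel \<Otimes>\<^sub>M W \<Otimes>\<^sub>M Q)"
      using a w si by (intro measurable_Pair) auto
    from measurable_compose[OF this G_meas] show ?thesis by simp
  qed
  then show ?thesis unfolding minibatch_grad_def
    by (intro borel_measurable_scaleR borel_measurable_const borel_measurable_sum) auto
qed

lemma lip_mb:
  fixes G :: "'a::real_normed_vector \<Rightarrow> 'w \<Rightarrow> 'z \<Rightarrow> 'a"
  assumes M: "M > 0"
    and lip: "\<And>z \<omega> \<theta>1 \<theta>2. z \<in> S \<Longrightarrow> norm (G \<theta>1 \<omega> z - G \<theta>2 \<omega> z) \<le> l * norm (\<theta>1 - \<theta>2)"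
    and zs: "\<And>i. i < M \<Longrightarrow> zs i \<in> S"
  shows "norm (minibatch_grad G M \<theta>1 \<omega> zs - minibatch_grad G M \<theta>2 \<omega> zs) \<le> l * norm (\<theta>1 - \<theta>2)"
proof -
  have "minibatch_grad G M \<theta>1 \<omega> zs - minibatch_grad G M \<theta>2 \<omega> zs
      = (1 / real M) *\<^sub>R (\<Sum>i<M. G \<theta>1 \<omega> (zs i) - G \<theta>2 \<omega> (zs i))"
    by (simp add: minibatch_grad_def scaleR_diff_right sum_subtractf)
  then have "norm (minibatch_grad G M \<theta>1 \<omega> zs - minibatch_grad G M \<theta>2 \<omega> zs)
      = (1 / real M) * norm (\<Sum>i<M. G \<theta>1 \<omega> (zs i) - G \<theta>2 \<omega> (zs i))"
    by simp
  also have "\<dots> \<le> (1 / real M) * (\<Sum>i<M. l * norm (\<theta>1 - \<theta>2))"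
    by (intro mult_left_mono order_trans[OF norm_sum] sum_mono lip zs) auto
  also have "\<dots> = l * norm (\<theta>1 - \<theta>2)" using M by simp
  finally show ?thesis .
qed

lemma sq2:
  fixes x a c :: real
  assumes "0 \<le> x" "x \<le> a + c"
  shows "x\<^sup>2 \<le> 2 * a\<^sup>2 + 2 * c\<^sup>2"
proof -
  have "x\<^sup>2 \<le> (a + c)\<^sup>2" using power_mono[OF assms(2) assms(1), of 2] by simp
  moreover have "0 \<le> (a - c)\<^sup>2" by simp
  ultimately show ?thesis by (simp add: power2_eq_square algebra_simps)
qed

lemma fub_snd:
  fixes f :: "'h \<times> 'b \<Rightarrow> ennreal"
  assumes N1: "prob_space N1" and N2: "prob_space N2"
    and f: "f \<in> borel_measurable (P \<Otimes>\<^sub>M N2)"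
  shows "(\<integral>\<^sup>+ x. f (fst x, snd (snd x)) \<partial>(P \<Otimes>\<^sub>M N1 \<Otimes>\<^sub>M N2)) = (\<integral>\<^sup>+ h. \<integral>\<^sup>+ b. f (h, b) \<partial>N2 \<partial>P)"
proof -
  interpret N1: prob_space N1 by fact
  interpret N2: prob_space N2 by fact
  interpret N12: pair_prob_space N1 N2 by unfold_locales
  have sf: "sigma_finite_measure (N1 \<Otimes>\<^sub>M N2)"
    by (rule prob_space_imp_sigma_finite[OF N12.P.prob_space_axioms])
  have "(\<integral>\<^sup>+ x. f (fst x, snd (snd x)) \<partial>(P \<Otimes>\<^sub>M N1 \<Otimes>\<^sub>M N2))
      = (\<integral>\<^sup>+ h. \<integral>\<^sup>+ y. f (h, snd y) \<partial>(N1 \<Otimes>\<^sub>M N2) \<partial>P)"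
  proof -
    have m: "(\<lambda>z. f (fst z, snd (snd z))) \<in> borel_measurable (P \<Otimes>\<^sub>M N1 \<Otimes>\<^sub>M N2)"
      using f by measurable
    show ?thesis using sigma_finite_measure.nn_integral_fst[OF sf m] by simp
  qed
  also have "\<dots> = (\<integral>\<^sup>+ h. \<integral>\<^sup>+ b. f (h, b) \<partial>N2 \<partial>P)"
  proof (rule nn_integral_cong)
    fix h assume h: "h \<in> space P"
    have "(\<integral>\<^sup>+ y. f (h, snd y) \<partial>(N1 \<Otimes>\<^sub>M N2)) = (\<integral>\<^sup>+ a. \<integral>\<^sup>+ b. f (h, b) \<partial>N2 \<partial>N1)"
    proof -
      have m: "(\<lambda>y. f (h, snd y)) \<in> borel_measurable (N1 \<Otimes>\<^sub>M N2)"
        using f h by measurable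
      show ?thesis using N2.nn_integral_fst[OF m] by simp
    qed
    also have "\<dots> = (\<integral>\<^sup>+ b. f (h, b) \<partial>N2)"
      by (simp add: N1.emeasure_space_1)
    finally show "(\<integral>\<^sup>+ y. f (h, snd y) \<partial>(N1 \<Otimes>\<^sub>M N2)) = (\<integral>\<^sup>+ b. f (h, b) \<partial>N2)" .
  qed
  finally show ?thesis .
qed

lemma fub_fst:
  fixes f :: "'h \<times> 'b \<Rightarrow> ennreal"
  assumes N1: "prob_space N1" and N2: "prob_space N2"
    and f: "f \<in> borel_measurable (P \<Otimes>\<^sub>M N1)"
  shows "(\<integral>\<^sup>+ x. f (fst x, fst (snd x)) \<partial>(P \<Otimes>\<^sub>M N1 \<Otimes>\<^sub>M N2)) = (\<integral>\<^sup>+ h. \<integral>\<^sup>+ b. f (h, b) \<partial>N1 \<partial>P)"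
proof -
  interpret N1: prob_space N1 by fact
  interpret N2: prob_space N2 by fact
  interpret N12: pair_prob_space N1 N2 by unfold_locales
  have sf: "sigma_finite_measure (N1 \<Otimes>\<^sub>M N2)"
    by (rule prob_space_imp_sigma_finite[OF N12.P.prob_space_axioms])
  have "(\<integral>\<^sup>+ x. f (fst x, fst (snd x)) \<partial>(P \<Otimes>\<^sub>M N1 \<Otimes>\<^sub>M N2))
      = (\<integral>\<^sup>+ h. \<integral>\<^sup>+ y. f (h, fst y) \<partial>(N1 \<Otimes>\<^sub>M N2) \<partial>P)"
  proof -
    have m: "(\<lambda>z. f (fst z, fst (snd z))) \<in> borel_measurable (P \<Otimes>\<^sub>M N1 \<Otimes>\<^sub>M N2)"
      using f by measurable
    show ?thesis using sigma_finite_measure.nn_integral_fst[OF sf m] by simp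
  qed
  also have "\<dots> = (\<integral>\<^sup>+ h. \<integral>\<^sup>+ b. f (h, b) \<partial>N1 \<partial>P)"
  proof (rule nn_integral_cong)
    fix h assume h: "h \<in> space P"
    have "(\<integral>\<^sup>+ y. f (h, fst y) \<partial>(N1 \<Otimes>\<^sub>M N2)) = (\<integral>\<^sup>+ a. \<integral>\<^sup>+ b. f (h, a) \<partial>N2 \<partial>N1)"
    proof -
      have m: "(\<lambda>y. f (h, fst y)) \<in> borel_measurable (N1 \<Otimes>\<^sub>M N2)"
        using f h by measurable
      show ?thesis using N2.nn_integral_fst[OF m] by simp
    qed
    also have "\<dots> = (\<integral>\<^sup>+ a. f (h, a) \<partial>N1)"
      by (simp add: N2.emeasure_space_1)
    finally show "(\<integral>\<^sup>+ y. f (h, fst y) \<partial>(N1 \<Otimes>\<^sub>M N2)) = (\<integral>\<^sup>+ b. f (h, b) \<partial>N1)" .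
  qed
  finally show ?thesis .
qed


lemma G_fix:
  assumes G_meas: "(\<lambda>(x, w, z). G x w z) \<in> borel_measurable (borel \<Otimes>\<^sub>M W \<Otimes>\<^sub>M Q)"
    and \<omega>: "\<omega> \<in> space W"
  shows "(\<lambda>z. G \<theta> \<omega> z) \<in> borel_measurable Q"
proof -
  have "(\<lambda>z. (\<theta>, \<omega>, z)) \<in> measurable Q (borel \<Otimes>\<^sub>M W \<Otimes>\<^sub>M Q)"
    using \<omega> by (intro measurable_Pair measurable_const measurable_ident_sets) auto
  from measurable_compose[OF this G_meas] show ?thesis by simp
qed

theorem lemmaA3:
  fixes Q :: "'z measure" and W :: "'w measure" and P :: "'h measure"
    and L :: "'a::euclidean_space \<Rightarrow> 'w \<Rightarrow> 'z \<Rightarrow> real"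
    and G :: "'a \<Rightarrow> 'w \<Rightarrow> 'z \<Rightarrow> 'a"
    and GL :: "'a \<Rightarrow> 'w \<Rightarrow> 'a"
    and \<theta>t :: "'h \<Rightarrow> 'a" and \<omega>t :: "'h \<Rightarrow> 'w"
    and \<sigma> l \<rho> :: real and M :: nat
  assumes Q: "prob_space Q" and P: "prob_space P"
    and M: "M > 0" and \<rho>: "\<rho> > 0"
    and G_deriv: "\<And>\<theta> \<omega> z. ((\<lambda>x. L x \<omega> z) has_derivative (\<lambda>h. G \<theta> \<omega> z \<bullet> h)) (at \<theta>)"
    and GL_deriv: "\<And>\<theta> \<omega>. ((\<lambda>x. \<integral>z. L x \<omega> z \<partial>Q) has_derivative (\<lambda>h. GL \<theta> \<omega> \<bullet> h)) (at \<theta>)"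
    and unbiased: "\<And>\<theta> \<omega>. (\<integral>z. G \<theta> \<omega> z \<partial>Q) = GL \<theta> \<omega>"
    and variance: "\<And>\<theta> \<omega>. (\<integral>\<^sup>+ z. ennreal ((norm (G \<theta> \<omega> z - GL \<theta> \<omega>))\<^sup>2) \<partial>Q) \<le> ennreal (\<sigma>\<^sup>2)"
    and lipschitz: "\<And>z \<omega> \<theta>1 \<theta>2. z \<in> space Q \<Longrightarrow>
        norm (G \<theta>1 \<omega> z - G \<theta>2 \<omega> z) \<le> l * norm (\<theta>1 - \<theta>2)"
    and G_meas: "(\<lambda>(x, w, z). G x w z) \<in> borel_measurable (borel \<Otimes>\<^sub>M W \<Otimes>\<^sub>M Q)"
    and \<theta>t_meas: "\<theta>t \<in> borel_measurable P"
    and \<omega>t_meas: "\<omega>t \<in> measurable P W"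
  shows "(\<integral>\<^sup>+ (h, zs1, zs2).
            ennreal ((norm (minibatch_grad G M
               (\<theta>t h + \<rho> *\<^sub>R minibatch_grad G M (\<theta>t h) (\<omega>t h) zs1) (\<omega>t h) zs2))\<^sup>2)
          \<partial>(P \<Otimes>\<^sub>M PiM {..<M} (\<lambda>_. Q) \<Otimes>\<^sub>M PiM {..<M} (\<lambda>_. Q)))
     \<le> ennreal (4 * \<rho>\<^sup>2 * l\<^sup>2 + 2 * \<rho> * l + 2) *
          (\<integral>\<^sup>+ h. ennreal ((norm (GL (\<theta>t h) (\<omega>t h)))\<^sup>2) \<partial>P)
       + ennreal ((5 * \<rho>\<^sup>2 * l\<^sup>2 + 2) * \<sigma>\<^sup>2 / real M)"
proof -
  interpret Qp: prob_space Q by fact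
  interpret Pp: prob_space P by fact
  let ?Pi = "PiM {..<M} (\<lambda>_. Q)"
  have PiP: "prob_space ?Pi" by (rule prob_space_PiM) (rule Q)
  define A where "A h zs = (norm (minibatch_grad G M (\<theta>t h) (\<omega>t h) zs))\<^sup>2" for h zs
  define k where "k = (l * \<rho>)\<^sup>2"
  define s where "s = \<sigma>\<^sup>2 / real M"
  define I where "I = (\<integral>\<^sup>+ h. ennreal ((norm (GL (\<theta>t h) (\<omega>t h)))\<^sup>2) \<partial>P)"
  have A0: "0 \<le> A h zs" for h zs by (simp add: A_def)
  have k0: "0 \<le> k" by (simp add: k_def)
  have s0: "0 \<le> s" by (simp add: s_def)
  have l0: "0 \<le> l"
  proof -
    obtain z where z: "z \<in> space Q" using Qp.not_empty by blast
    obtain b :: 'a where b: "b \<in> Basis" using nonempty_Basis by blast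
    have "norm (G b undefined z - G 0 undefined z) \<le> l * norm (b - 0)" by (rule lipschitz[OF z])
    moreover have "norm b = 1" using b by simp
    ultimately have "norm (G b undefined z - G 0 undefined z) \<le> l" by simp
    then show ?thesis using norm_ge_zero[of "G b undefined z - G 0 undefined z"] by linarith
  qed
  have sp: "zs i \<in> space Q" if "zs \<in> space ?Pi" "i < M" for zs i
    using that by (auto simp: space_PiM PiE_iff)
  have pw: "(norm (minibatch_grad G M (\<theta>t h + \<rho> *\<^sub>R minibatch_grad G M (\<theta>t h) (\<omega>t h) zs1) (\<omega>t h) zs2))\<^sup>2
      \<le> 2 * A h zs2 + 2 * k * A h zs1"
    if "zs1 \<in> space ?Pi" "zs2 \<in> space ?Pi" for h zs1 zs2
  proof -
    let ?g1 = "minibatch_grad G M (\<theta>t h) (\<omega>t h) zs1"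
    let ?x = "minibatch_grad G M (\<theta>t h + \<rho> *\<^sub>R ?g1) (\<omega>t h) zs2"
    let ?y = "minibatch_grad G M (\<theta>t h) (\<omega>t h) zs2"
    have "norm (?x - ?y) \<le> l * norm ((\<theta>t h + \<rho> *\<^sub>R ?g1) - \<theta>t h)"
      by (rule lip_mb[OF M lipschitz]) (auto intro: sp[OF that(2)])
    also have "\<dots> = l * \<rho> * norm ?g1" using \<rho> by simp
    finally have d: "norm (?x - ?y) \<le> l * \<rho> * norm ?g1" .
    have "norm ?x \<le> norm ?y + norm (?x - ?y)" by (rule norm_triangle_sub)
    with d have "norm ?x \<le> norm ?y + l * \<rho> * norm ?g1" by linarith
    then have "(norm ?x)\<^sup>2 \<le> 2 * (norm ?y)\<^sup>2 + 2 * (l * \<rho> * norm ?g1)\<^sup>2"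
      by (intro sq2) auto
    then show ?thesis by (simp add: A_def k_def power_mult_distrib)
  qed
  have mbm: "(\<lambda>x. minibatch_grad G M (\<theta>t (fst x)) (\<omega>t (fst x)) (snd x)) \<in> borel_measurable (P \<Otimes>\<^sub>M ?Pi)"
    by (rule mb_meas[OF G_meas measurable_compose[OF measurable_fst \<theta>t_meas]
          measurable_compose[OF measurable_fst \<omega>t_meas] measurable_snd])
  have mA: "(\<lambda>p. ennreal (c * A (fst p) (snd p))) \<in> borel_measurable (P \<Otimes>\<^sub>M ?Pi)" for c
    unfolding A_def using mbm by measurable
  have mAh: "(\<lambda>zs. ennreal (A h zs)) \<in> borel_measurable ?Pi" if h: "h \<in> space P" for h
  proof -
    have "\<omega>t h \<in> space W" using measurable_space[OF \<omega>t_meas h] .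
    then have "(\<lambda>zs. minibatch_grad G M (\<theta>t h) (\<omega>t h) zs) \<in> borel_measurable ?Pi"
      by (intro mb_meas[OF G_meas]) auto
    then show ?thesis unfolding A_def by measurable
  qed
  have GLm: "(\<lambda>h. GL (\<theta>t h) (\<omega>t h)) \<in> borel_measurable P"
  proof -
    have m: "(\<lambda>(h, z). G (\<theta>t h) (\<omega>t h) z) \<in> borel_measurable (P \<Otimes>\<^sub>M Q)"
    proof -
      have "(\<lambda>p. (\<theta>t (fst p), \<omega>t (fst p), snd p)) \<in> measurable (P \<Otimes>\<^sub>M Q) (borel \<Otimes>\<^sub>M W \<Otimes>\<^sub>M Q)"
        by (intro measurable_Pair measurable_compose[OF measurable_fst \<theta>t_meas]
              measurable_compose[OF measurable_fst \<omega>t_meas] measurable_snd)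
      from measurable_compose[OF this G_meas] show ?thesis by (simp add: case_prod_beta')
    qed
    have "(\<lambda>h. \<integral>z. G (\<theta>t h) (\<omega>t h) z \<partial>Q) \<in> borel_measurable P"
      by (rule Qp.borel_measurable_lebesgue_integral[OF m])
    then show ?thesis by (simp add: unbiased)
  qed
  have Nm: "(\<lambda>h. ennreal (c * (norm (GL (\<theta>t h) (\<omega>t h)))\<^sup>2)) \<in> borel_measurable P" for c
    using GLm by measurable
  have Kb: "(\<integral>\<^sup>+ zs. ennreal (c * A h zs) \<partial>?Pi) \<le> ennreal (c * (norm (GL (\<theta>t h) (\<omega>t h)))\<^sup>2) + ennreal (c * s)"
    if h: "h \<in> space P" and c: "0 \<le> c" for h c
  proof -
    have w: "\<omega>t h \<in> space W" using measurable_space[OF \<omega>t_meas h] .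
    have "(\<integral>\<^sup>+ zs. ennreal (c * A h zs) \<partial>?Pi) = (\<integral>\<^sup>+ zs. ennreal c * ennreal (A h zs) \<partial>?Pi)"
      using c A0 by (simp add: ennreal_mult)
    also have "\<dots> = ennreal c * (\<integral>\<^sup>+ zs. ennreal (A h zs) \<partial>?Pi)"
      by (rule nn_integral_cmult[OF mAh[OF h]])
    also have "\<dots> \<le> ennreal c * ennreal ((norm (GL (\<theta>t h) (\<omega>t h)))\<^sup>2 + \<sigma>\<^sup>2 / real M)"
    proof (rule mult_left_mono)
      show "(\<integral>\<^sup>+ zs. ennreal (A h zs) \<partial>?Pi) \<le> ennreal ((norm (GL (\<theta>t h) (\<omega>t h)))\<^sup>2 + \<sigma>\<^sup>2 / real M)"
        unfolding A_def minibatch_grad_def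
        by (rule mb_bound[OF Q M G_fix[OF G_meas w] unbiased variance])
    qed simp
    also have "\<dots> = ennreal (c * ((norm (GL (\<theta>t h) (\<omega>t h)))\<^sup>2 + s))"
      using c s0 unfolding s_def by (intro ennreal_mult[symmetric]) auto
    also have "\<dots> = ennreal (c * (norm (GL (\<theta>t h) (\<omega>t h)))\<^sup>2 + c * s)"
      by (simp only: distrib_left)
    also have "\<dots> = ennreal (c * (norm (GL (\<theta>t h) (\<omega>t h)))\<^sup>2) + ennreal (c * s)"
      using c s0 by (intro ennreal_plus) auto
    finally show ?thesis .
  qed
  have Bd: "(\<integral>\<^sup>+ h. \<integral>\<^sup>+ zs. ennreal (c * A h zs) \<partial>?Pi \<partial>P) \<le> ennreal c * I + ennreal (c * s)"
    if c: "0 \<le> c" for c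
  proof -
    have "(\<integral>\<^sup>+ h. \<integral>\<^sup>+ zs. ennreal (c * A h zs) \<partial>?Pi \<partial>P)
        \<le> (\<integral>\<^sup>+ h. ennreal (c * (norm (GL (\<theta>t h) (\<omega>t h)))\<^sup>2) + ennreal (c * s) \<partial>P)"
      by (rule nn_integral_mono) (rule Kb[OF _ c])
    also have "\<dots> = (\<integral>\<^sup>+ h. ennreal (c * (norm (GL (\<theta>t h) (\<omega>t h)))\<^sup>2) \<partial>P) + ennreal (c * s)"
      by (subst nn_integral_add) (auto intro: Nm simp: Pp.emeasure_space_1)
    also have "(\<integral>\<^sup>+ h. ennreal (c * (norm (GL (\<theta>t h) (\<omega>t h)))\<^sup>2) \<partial>P) = ennreal c * I"
    proof -
      have "(\<integral>\<^sup>+ h. ennreal (c * (norm (GL (\<theta>t h) (\<omega>t h)))\<^sup>2) \<partial>P)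
          = (\<integral>\<^sup>+ h. ennreal c * ennreal ((norm (GL (\<theta>t h) (\<omega>t h)))\<^sup>2) \<partial>P)"
        using c by (simp add: ennreal_mult)
      also have "\<dots> = ennreal c * I" unfolding I_def
        by (rule nn_integral_cmult) (use Nm[of 1] in simp)
      finally show ?thesis .
    qed
    finally show ?thesis .
  qed
  let ?PPP = "P \<Otimes>\<^sub>M ?Pi \<Otimes>\<^sub>M ?Pi"
  have LHS: "(\<integral>\<^sup>+ (h, zs1, zs2).
            ennreal ((norm (minibatch_grad G M
               (\<theta>t h + \<rho> *\<^sub>R minibatch_grad G M (\<theta>t h) (\<omega>t h) zs1) (\<omega>t h) zs2))\<^sup>2) \<partial>?PPP)
      \<le> (\<integral>\<^sup>+ x. ennreal (2 * A (fst x) (snd (snd x))) + ennreal ((2 * k) * A (fst x) (fst (snd x))) \<partial>?PPP)"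
  proof (rule nn_integral_mono)
    fix x assume x: "x \<in> space ?PPP"
    obtain h zs1 zs2 where xe: "x = (h, zs1, zs2)" by (cases x) auto
    have z1: "zs1 \<in> space ?Pi" and z2: "zs2 \<in> space ?Pi" using x by (auto simp: xe space_pair_measure)
    show "(case x of (h, zs1, zs2) \<Rightarrow>
            ennreal ((norm (minibatch_grad G M
               (\<theta>t h + \<rho> *\<^sub>R minibatch_grad G M (\<theta>t h) (\<omega>t h) zs1) (\<omega>t h) zs2))\<^sup>2))
        \<le> ennreal (2 * A (fst x) (snd (snd x))) + ennreal ((2 * k) * A (fst x) (fst (snd x)))"
    proof -
      have "ennreal ((norm (minibatch_grad G M
               (\<theta>t h + \<rho> *\<^sub>R minibatch_grad G M (\<theta>t h) (\<omega>t h) zs1) (\<omega>t h) zs2))\<^sup>2)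
          \<le> ennreal (2 * A h zs2 + 2 * k * A h zs1)"
        by (rule ennreal_leI[OF pw[OF z1 z2]])
      also have "\<dots> = ennreal (2 * A h zs2) + ennreal ((2 * k) * A h zs1)"
        using A0[of h zs1] A0[of h zs2] k0 by (intro ennreal_plus) auto
      finally show ?thesis unfolding xe fst_conv snd_conv prod.case .
    qed
  qed
  also have "\<dots> = (\<integral>\<^sup>+ x. ennreal (2 * A (fst x) (snd (snd x))) \<partial>?PPP)
       + (\<integral>\<^sup>+ x. ennreal ((2 * k) * A (fst x) (fst (snd x))) \<partial>?PPP)"
  proof (rule nn_integral_add)
    show "(\<lambda>x. ennreal (2 * A (fst x) (snd (snd x)))) \<in> borel_measurable ?PPP"
    proof -
      have "(\<lambda>x. (fst x, snd (snd x))) \<in> measurable ?PPP (P \<Otimes>\<^sub>M ?Pi)" by measurable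
      from measurable_compose[OF this mA[of 2]] show ?thesis by simp
    qed
    show "(\<lambda>x. ennreal ((2 * k) * A (fst x) (fst (snd x)))) \<in> borel_measurable ?PPP"
    proof -
      have "(\<lambda>x. (fst x, fst (snd x))) \<in> measurable ?PPP (P \<Otimes>\<^sub>M ?Pi)" by measurable
      from measurable_compose[OF this mA[of "2 * k"]] show ?thesis by simp
    qed
  qed
  also have "(\<integral>\<^sup>+ x. ennreal (2 * A (fst x) (snd (snd x))) \<partial>?PPP)
      = (\<integral>\<^sup>+ h. \<integral>\<^sup>+ zs. ennreal (2 * A h zs) \<partial>?Pi \<partial>P)"
    using fub_snd[OF PiP PiP mA[of 2]] by simp
  also have "(\<integral>\<^sup>+ x. ennreal ((2 * k) * A (fst x) (fst (snd x))) \<partial>?PPP)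
      = (\<integral>\<^sup>+ h. \<integral>\<^sup>+ zs. ennreal ((2 * k) * A h zs) \<partial>?Pi \<partial>P)"
    using fub_fst[OF PiP PiP mA[of "2 * k"]] by simp
  also have "(\<integral>\<^sup>+ h. \<integral>\<^sup>+ zs. ennreal (2 * A h zs) \<partial>?Pi \<partial>P)
      + (\<integral>\<^sup>+ h. \<integral>\<^sup>+ zs. ennreal ((2 * k) * A h zs) \<partial>?Pi \<partial>P)
      \<le> (ennreal 2 * I + ennreal (2 * s)) + (ennreal (2 * k) * I + ennreal ((2 * k) * s))"
    using Bd[of 2] Bd[of "2 * k"] k0 by (intro add_mono) auto
  also have "\<dots> = (ennreal 2 + ennreal (2 * k)) * I + (ennreal (2 * s) + ennreal ((2 * k) * s))"
    by (simp only: distrib_left distrib_right ac_simps)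
  also have "\<dots> = ennreal (2 + 2 * k) * I + ennreal (2 * s + (2 * k) * s)"
  proof -
    have e1: "ennreal 2 + ennreal (2 * k) = ennreal (2 + 2 * k)"
      by (rule ennreal_plus[symmetric]) (use k0 in auto)
    have e2: "ennreal (2 * s) + ennreal ((2 * k) * s) = ennreal (2 * s + (2 * k) * s)"
      by (rule ennreal_plus[symmetric]) (use k0 s0 in auto)
    show ?thesis by (simp only: e1 e2)
  qed
  also have "\<dots> \<le> ennreal (4 * \<rho>\<^sup>2 * l\<^sup>2 + 2 * \<rho> * l + 2) * I
       + ennreal ((5 * \<rho>\<^sup>2 * l\<^sup>2 + 2) * \<sigma>\<^sup>2 / real M)"
  proof -
    have "0 \<le> \<rho> * l" using \<rho> l0 by simp
    moreover have "0 \<le> \<rho>\<^sup>2 * l\<^sup>2" by simp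
    moreover have "k = \<rho>\<^sup>2 * l\<^sup>2" unfolding k_def by (simp add: power_mult_distrib)
    ultimately have "2 + 2 * k \<le> 4 * \<rho>\<^sup>2 * l\<^sup>2 + 2 * \<rho> * l + 2"
      by linarith
    then have c1: "ennreal (2 + 2 * k) \<le> ennreal (4 * \<rho>\<^sup>2 * l\<^sup>2 + 2 * \<rho> * l + 2)"
      by (rule ennreal_leI)
    have "2 * s + (2 * k) * s = (2 + 2 * k) * s" by (simp add: algebra_simps)
    also have "\<dots> \<le> (5 * k + 2) * s" using k0 s0 by (intro mult_right_mono) auto
    also have "\<dots> = (5 * \<rho>\<^sup>2 * l\<^sup>2 + 2) * \<sigma>\<^sup>2 / real M"
      unfolding k_def s_def by (simp add: power_mult_distrib algebra_simps add_divide_distrib)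
    finally have c2: "ennreal (2 * s + (2 * k) * s) \<le> ennreal ((5 * \<rho>\<^sup>2 * l\<^sup>2 + 2) * \<sigma>\<^sup>2 / real M)"
      by (rule ennreal_leI)
    show ?thesis by (rule add_mono[OF mult_right_mono[OF c1 zero_le] c2])
  qed
  finally show ?thesis unfolding I_def .
qed

end
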